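(* Let $G$ be a connected bipartite graph with bipartition $V(G)=X \cup Y$, $|X|=s$ and $|Y|=t$, let $m$ be the number of edges and $\beta$ the matching number of $G$. If $0\leq \alpha \leq 1$, then $$S_k(A_{\alpha}(G))\geq \frac{\alpha m}{2}\left(\frac{1}{s}+\frac{1}{t}\right)+\frac{(1-\alpha)m}{\sqrt{st}}+(k-1)\left(\alpha -\frac{2(1-\alpha)\sqrt{st}}{s+t}\right)$$ for $1\leq k \leq \beta+1$.
   Context: All graphs are simple and undirected. $A_{\alpha}(G)=\alpha D(G)+(1-\alpha)A(G)$, where $A(G)$ is the adjacency matrix and $D(G)$ the diagonal degree matrix. For a real symmetric matrix $M$ with eigenvalues $\lambda_1(M)\geq\cdots\geq\lambda_n(M)$, $S_k(M)=\sum_{i=1}^k\lambda_i(M)$. The matching number is the maximum size of a matching. *)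

theory Defs
  imports "Jordan_Normal_Form.Char_Poly" "HOL-Library.Multiset"
begin

definition simple_graph :: "nat \<Rightarrow> nat set set \<Rightarrow> bool" where
  "simple_graph n E \<longleftrightarrow> (\<forall>e\<in>E. \<exists>u v. e = {u, v} \<and> u \<noteq> v \<and> u < n \<and> v < n)"

definition adj :: "nat set set \<Rightarrow> nat \<Rightarrow> nat \<Rightarrow> bool" where
  "adj E u v \<longleftrightarrow> {u, v} \<in> E"

definition degree :: "nat set set \<Rightarrow> nat \<Rightarrow> nat" where
  "degree E v = card {e\<in>E. v \<in> e}"

definition connected_graph :: "nat \<Rightarrow> nat set set \<Rightarrow> bool" where
  "connected_graph n E \<longleftrightarrow> n \<ge> 1 \<and> (\<forall>u<n. \<forall>v<n. (adj E)\<^sup>*\<^sup>* u v)"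

definition bipartition :: "nat \<Rightarrow> nat set set \<Rightarrow> nat set \<Rightarrow> nat set \<Rightarrow> bool" where
  "bipartition n E X Y \<longleftrightarrow> X \<union> Y = {0..<n} \<and> X \<inter> Y = {} \<and>
     (\<forall>e\<in>E. card (e \<inter> X) = 1 \<and> card (e \<inter> Y) = 1)"

definition is_matching :: "nat set set \<Rightarrow> nat set set \<Rightarrow> bool" where
  "is_matching E M \<longleftrightarrow> M \<subseteq> E \<and> (\<forall>e\<in>M. \<forall>f\<in>M. e \<noteq> f \<longrightarrow> e \<inter> f = {})"

definition matching_number :: "nat set set \<Rightarrow> nat" where
  "matching_number E = Max (card ` {M. is_matching E M})"

definition adj_matrix :: "nat \<Rightarrow> nat set set \<Rightarrow> real mat" where
  "adj_matrix n E = mat n n (\<lambda>(i, j). if {i, j} \<in> E then 1 else 0)"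

definition deg_matrix :: "nat \<Rightarrow> nat set set \<Rightarrow> real mat" where
  "deg_matrix n E = mat n n (\<lambda>(i, j). if i = j then real (degree E i) else 0)"

definition A_alpha :: "real \<Rightarrow> nat \<Rightarrow> nat set set \<Rightarrow> real mat" where
  "A_alpha \<alpha> n E = \<alpha> \<cdot>\<^sub>m deg_matrix n E + (1 - \<alpha>) \<cdot>\<^sub>m adj_matrix n E"

text \<open>Eigenvalues (with multiplicity) of a real symmetric matrix, in non-increasing
  order: the roots of the characteristic polynomial (which splits over the reals).\<close>

definition eigenvalues_desc :: "real mat \<Rightarrow> real list" where
  "eigenvalues_desc M = rev (sorted_list_of_multiset (proots (char_poly M)))"

definition S_k :: "nat \<Rightarrow> real mat \<Rightarrow> real" where
  "S_k k M = sum_list (take k (eigenvalues_desc M))"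

end

theory Submission
  imports Defs "Jordan_Normal_Form.Schur_Decomposition" "HOL-Combinatorics.Permutations"
begin


lemma herm_real:
  fixes N :: "real mat" and lam :: complex
  assumes N: "N \<in> carrier_mat n n" and sym: "\<And>i j. i<n \<Longrightarrow> j<n \<Longrightarrow> N$$(i,j) = N$$(j,i)"
  and root: "poly (char_poly (map_mat complex_of_real N)) lam = 0"
  shows "Im lam = 0"
proof -
  define Nc where "Nc = map_mat complex_of_real N"
  have Nc: "Nc \<in> carrier_mat n n" using N unfolding Nc_def by auto
  have "eigenvalue Nc lam" using root eigenvalue_root_char_poly[OF Nc] unfolding Nc_def by auto
  then obtain v where v: "v \<in> carrier_vec n" "v \<noteq> 0\<^sub>v n" "Nc *\<^sub>v v = lam \<cdot>\<^sub>v v"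
    unfolding eigenvalue_def eigenvector_def using Nc by auto
  define s where "s = (\<Sum>i\<in>{0..<n}. cnj (v$i) * (\<Sum>j\<in>{0..<n}. complex_of_real (N$$(i,j)) * v$j))"
  define r where "r = (\<Sum>i\<in>{0..<n}. cnj (v$i) * v$i)"
  have Nv: "(\<Sum>j\<in>{0..<n}. complex_of_real (N$$(i,j)) * v$j) = lam * v$i" if "i < n" for i
  proof -
    have "(Nc *\<^sub>v v) $ i = lam * v $ i" using v(3) that v(1) by simp
    thus ?thesis using that Nc v(1) N unfolding Nc_def by (simp add: scalar_prod_def)
  qed
  have s_eq: "s = lam * r" unfolding s_def r_def sum_distrib_left[of lam]
    by (rule sum.cong, simp, simp add: Nv)
  have "cnj s = (\<Sum>i\<in>{0..<n}. v$i * (\<Sum>j\<in>{0..<n}. complex_of_real (N$$(i,j)) * cnj (v$j)))"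
    unfolding s_def by simp
  also have "\<dots> = (\<Sum>i\<in>{0..<n}. \<Sum>j\<in>{0..<n}. v$i * complex_of_real (N$$(i,j)) * cnj (v$j))"
    by (simp add: sum_distrib_left algebra_simps)
  also have "\<dots> = (\<Sum>j\<in>{0..<n}. \<Sum>i\<in>{0..<n}. v$i * complex_of_real (N$$(i,j)) * cnj (v$j))"
    by (rule sum.swap)
  also have "\<dots> = s" unfolding s_def
    by (simp add: sum_distrib_left algebra_simps sym)
  finally have cs: "cnj s = s" .
  have r_eq: "r = complex_of_real (\<Sum>i\<in>{0..<n}. (cmod (v$i))^2)"
    unfolding r_def of_real_sum by (rule sum.cong, simp, subst complex_norm_square, simp)
  obtain i where i: "i < n" "v $ i \<noteq> 0" using v(1,2) by (auto simp: vec_eq_iff)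
  have "(\<Sum>i\<in>{0..<n}. (cmod (v$i))^2) > 0"
  proof -
    have "(\<Sum>i\<in>{0..<n}. (cmod (v$i))^2) \<ge> (cmod (v$i))^2"
      by (rule member_le_sum, insert i, auto)
    moreover have "(cmod (v$i))^2 > 0" using i by simp
    ultimately show ?thesis by linarith
  qed
  then have r0: "r \<noteq> 0" using r_eq by (metis of_real_eq_0_iff less_irrefl)
  have rr: "Im r = 0" using r_eq by (metis Im_complex_of_real)
  have "Im s = 0" using arg_cong[OF cs, of Im] by simp
  hence "lam = s / r" using s_eq r0 by simp
  thus ?thesis using `Im s = 0` rr r0 by (simp add: Im_divide)
qed

lemma poly_linear_prod: "poly (\<Prod>a\<leftarrow>as. [:- a, 1:]) (x::'a::comm_ring_1) = (\<Prod>a\<leftarrow>as. x - a)"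
  by (induct as) (auto simp: algebra_simps)

lemma real_split:
  fixes N :: "real mat"
  assumes N: "N \<in> carrier_mat n n" and sym: "\<And>i j. i<n \<Longrightarrow> j<n \<Longrightarrow> N$$(i,j) = N$$(j,i)"
  shows "\<exists>as. char_poly N = (\<Prod>a\<leftarrow>as. [:-a,1:]) \<and> length as = n"
proof -
  let ?Nc = "map_mat complex_of_real N"
  have Nc: "?Nc \<in> carrier_mat n n" using N by auto
  obtain cs where cs: "char_poly ?Nc = (\<Prod>a\<leftarrow>cs. [:-a,1:])" "length cs = n"
    using char_poly_factorized[OF Nc] by blast
  have re: "\<forall>a\<in>set cs. Im a = 0"
  proof
    fix a assume "a \<in> set cs"
    hence "poly (char_poly ?Nc) a = 0" unfolding cs(1) by (rule linear_poly_root)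
    thus "Im a = 0" using herm_real[OF N sym, of a] by simp
  qed
  define as where "as = map Re cs"
  have "poly (char_poly N) x = poly (\<Prod>a\<leftarrow>as. [:-a,1:]) x" for x
  proof -
    have "complex_of_real (poly (char_poly N) x) = poly (char_poly ?Nc) (of_real x)"
      by (simp only: of_real_hom.char_poly_hom[OF N] of_real_hom.poly_map_poly)
    also have "\<dots> = (\<Prod>a\<leftarrow>cs. of_real x - a)" unfolding cs(1) poly_linear_prod ..
    also have "\<dots> = complex_of_real (\<Prod>a\<leftarrow>as. x - a)" unfolding as_def using re
      by (induct cs) (auto simp: complex_eq_iff)
    finally show ?thesis unfolding poly_linear_prod by simp
  qed
  hence "char_poly N = (\<Prod>a\<leftarrow>as. [:-a,1:])" by (intro poly_ext) auto
  moreover have "length as = n" using cs(2) unfolding as_def by simp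
  ultimately show ?thesis by blast
qed

definition tr :: "'a::comm_ring_1 mat \<Rightarrow> 'a" where
  "tr A = (\<Sum>i\<in>{0..<dim_row A}. A$$(i,i))"

lemma tr_comm: assumes A: "A \<in> carrier_mat n m" and B: "B \<in> carrier_mat m n"
  shows "tr (A * B) = tr (B * A)"
proof -
  have "tr (A * B) = (\<Sum>i\<in>{0..<n}. \<Sum>k\<in>{0..<m}. A$$(i,k) * B$$(k,i))"
    unfolding tr_def using A B by (simp add: scalar_prod_def)
  also have "\<dots> = (\<Sum>k\<in>{0..<m}. \<Sum>i\<in>{0..<n}. B$$(k,i) * A$$(i,k))"
    by (subst sum.swap) (simp add: mult.commute)
  also have "\<dots> = tr (B * A)"
    unfolding tr_def using A B by (simp add: scalar_prod_def)
  finally show ?thesis .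
qed

lemma tr_add: assumes "A \<in> carrier_mat n n" "B \<in> carrier_mat n n"
  shows "tr (A + B) = tr A + tr B"
  unfolding tr_def using assms by (simp add: sum.distrib)

lemma tr_smult: assumes "A \<in> carrier_mat n n" shows "tr (c \<cdot>\<^sub>m A) = c * tr A"
  unfolding tr_def using assms by (simp add: sum_distrib_left)

lemma tr_one: "tr (1\<^sub>m n) = of_nat n"
  unfolding tr_def by simp

lemma tr_schur:
  fixes A :: "real mat"
  assumes A: "A \<in> carrier_mat n n" and cp: "char_poly A = (\<Prod>a\<leftarrow>as. [:-a,1:])"
  shows "tr A = sum_list as"
proof -
  obtain B P Q where sd: "schur_decomposition A as = (B,P,Q)" by (cases "schur_decomposition A as") auto
  from schur_decomposition[OF A cp sd]
  have sim: "similar_mat_wit A B P Q" and dg: "diag_mat B = as" by auto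
  from sim A have B: "B \<in> carrier_mat n n" and P: "P \<in> carrier_mat n n" and Q: "Q \<in> carrier_mat n n"
    and QP: "Q * P = 1\<^sub>m n" and AB: "A = P * B * Q"
    unfolding similar_mat_wit_def Let_def by auto
  have "tr A = tr (P * (B * Q))" using AB P B Q by simp
  also have "\<dots> = tr ((B * Q) * P)" by (rule tr_comm[OF P], insert B Q, auto)
  also have "\<dots> = tr B" using B Q P QP by simp
  also have "\<dots> = sum_list (diag_mat B)"
    unfolding tr_def diag_mat_def interv_sum_list_conv_sum_set_nat by simp
  finally show ?thesis using dg by simp
qed

definition orthonormal :: "nat \<Rightarrow> real vec list \<Rightarrow> bool" where
  "orthonormal n us \<longleftrightarrow> set us \<subseteq> carrier_vec n \<and>
     (\<forall>i<length us. \<forall>j<length us. us!i \<bullet> us!j = (if i = j then 1 else 0))"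

definition eigen_list :: "real mat \<Rightarrow> real vec list \<Rightarrow> real list \<Rightarrow> bool" where
  "eigen_list M us ls \<longleftrightarrow> length ls = length us \<and> (\<forall>i<length us. M *\<^sub>v us!i = ls!i \<cdot>\<^sub>v us!i)"

lemma orth_UTU: assumes "orthonormal n us"
  shows "transpose_mat (mat_of_cols n us) * mat_of_cols n us = 1\<^sub>m (length us)"
proof (rule eq_matI)
  fix a b assume a: "a < dim_row (1\<^sub>m (length us))" and b: "b < dim_col (1\<^sub>m (length us))"
  have c: "us ! a \<in> carrier_vec n" "us ! b \<in> carrier_vec n" using assms a b unfolding orthonormal_def by auto
  show "(transpose_mat (mat_of_cols n us) * mat_of_cols n us) $$ (a, b) = 1\<^sub>m (length us) $$ (a, b)"
    using a b c assms unfolding orthonormal_def by (simp add: col_mat_of_cols)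
qed auto

lemma eigen_MU: assumes M: "M \<in> carrier_mat n n" and o: "orthonormal n us" and e: "eigen_list M us ls"
  shows "M * mat_of_cols n us = mat_of_cols n us * mat (length us) (length us) (\<lambda>(a,b). if a = b then ls!a else 0)"
proof (rule eq_matI)
  fix i b assume i: "i < dim_row (mat_of_cols n us * mat (length us) (length us) (\<lambda>(a,b). if a = b then ls!a else 0))"
    and b: "b < dim_col (mat_of_cols n us * mat (length us) (length us) (\<lambda>(a,b). if a = b then ls!a else 0))"
  have i': "i < n" and b': "b < length us" using i b by auto
  have c: "us ! b \<in> carrier_vec n" using o b' unfolding orthonormal_def by auto
  have "(M * mat_of_cols n us) $$ (i,b) = (M *\<^sub>v us!b) $ i"
    using M i' b' c by (simp add: col_mat_of_cols)
  also have "\<dots> = ls!b * us!b $ i" using e b' i' c unfolding eigen_list_def by simp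
  also have "\<dots> = (mat_of_cols n us * mat (length us) (length us) (\<lambda>(a,b). if a = b then ls!a else 0)) $$ (i,b)"
    using i' b' c by (simp add: scalar_prod_def mat_of_cols_index if_distrib[of "\<lambda>x. _ * x"] cong: if_cong)
  finally show "(M * mat_of_cols n us) $$ (i,b) = (mat_of_cols n us * mat (length us) (length us) (\<lambda>(a,b). if a = b then ls!a else 0)) $$ (i,b)" .
qed (insert M, auto)

lemma smult_mat_vec: assumes "A \<in> carrier_mat nr nc" "v \<in> carrier_vec nc"
  shows "(c \<cdot>\<^sub>m A) *\<^sub>v v = c \<cdot>\<^sub>v (A *\<^sub>v (v :: real vec))"
  by (rule eq_vecI, insert assms, auto simp: scalar_prod_def sum_distrib_left ac_simps)

lemma transpose_smult: "transpose_mat (c \<cdot>\<^sub>m A) = c \<cdot>\<^sub>m transpose_mat (A :: real mat)"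
  by (rule eq_matI) auto

lemma mat_vec_zero: assumes "A \<in> carrier_mat nr nc" shows "A *\<^sub>v 0\<^sub>v nc = (0\<^sub>v nr :: real vec)"
  by (rule eq_vecI, insert assms, auto)

lemma vec_self_pos: assumes "v \<in> carrier_vec n" "v \<noteq> 0\<^sub>v n" shows "v \<bullet> (v :: real vec) > 0"
proof -
  obtain i where i: "i < n" "v $ i \<noteq> 0" using assms by (auto simp: vec_eq_iff)
  have "v \<bullet> v = (\<Sum>k\<in>{0..<n}. (v$k)^2)" using assms by (simp add: scalar_prod_def power2_eq_square)
  also have "\<dots> \<ge> (v$i)^2" by (rule member_le_sum, insert i, auto)
  finally show ?thesis using i by (smt (verit) zero_less_power2)
qed

lemma extend:
  assumes M: "M \<in> carrier_mat n n" and sym: "transpose_mat M = M"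
  and o: "orthonormal n us" and e: "eigen_list M us ls" and lt: "length us < n"
  shows "\<exists>u l. orthonormal n (us @ [u]) \<and> eigen_list M (us @ [u]) (ls @ [l])"
proof -
  define j where "j = length us"
  define U where "U = mat_of_cols n us"
  define UT where "UT = transpose_mat U"
  define D where "D = mat j j (\<lambda>(a,b). if a = b then ls!a else (0::real))"
  define K where "K = U * UT"
  define I where "I = (1\<^sub>m n :: real mat)"
  define P where "P = I - K"
  have U: "U \<in> carrier_mat n j" unfolding U_def j_def by simp
  have UT: "UT \<in> carrier_mat j n" unfolding UT_def using U by simp
  have D: "D \<in> carrier_mat j j" unfolding D_def by simp
  have K: "K \<in> carrier_mat n n" unfolding K_def using U UT by simp
  have I: "I \<in> carrier_mat n n" unfolding I_def by simp
  have P: "P \<in> carrier_mat n n" unfolding P_def using I K by (simp add: minus_carrier_mat)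
  have UTU: "UT * U = 1\<^sub>m j" unfolding UT_def U_def j_def by (rule orth_UTU[OF o])
  have MU: "M * U = U * D" unfolding U_def D_def j_def by (rule eigen_MU[OF M o e])
  have DT: "transpose_mat D = D" unfolding D_def by (rule eq_matI) auto
  have UTM: "UT * M = D * UT"
  proof -
    have "UT * M = transpose_mat (M * U)" unfolding UT_def using transpose_mult[OF M U] sym by simp
    also have "\<dots> = transpose_mat (U * D)" using MU by simp
    also have "\<dots> = D * UT" using transpose_mult[OF U D] DT unfolding UT_def by simp
    finally show ?thesis .
  qed
  have KT: "transpose_mat K = K" unfolding K_def UT_def using transpose_mult[OF U, of "transpose_mat U" n] U by simp
  have UTK: "UT * K = UT"
  proof -
    have "UT * K = (UT * U) * UT" unfolding K_def by (rule assoc_mult_mat[symmetric, OF UT U UT])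
    thus ?thesis using UTU UT by simp
  qed
  have UTP: "UT * P = 0\<^sub>m j n"
  proof -
    have "UT * P = UT * I - UT * K" unfolding P_def by (rule mult_minus_distrib_mat[OF UT I K])
    thus ?thesis using UTK UT unfolding I_def by simp
  qed
  have PM: "P * M \<in> carrier_mat n n" using P M by simp
  have PT: "transpose_mat P = P" unfolding P_def using transpose_minus[OF I K] KT unfolding I_def by simp
  define N where "N c = P * M * P + c \<cdot>\<^sub>m K" for c :: real
  have N: "N c \<in> carrier_mat n n" for c unfolding N_def using P M K by simp
  have NT: "transpose_mat (N c) = N c" for c
  proof -
    have "transpose_mat (N c) = transpose_mat (P * M * P) + transpose_mat (c \<cdot>\<^sub>m K)"
      unfolding N_def by (rule transpose_add, insert P M K, auto)
    also have "transpose_mat (P * M * P) = P * M * P"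
      using transpose_mult[of "P * M" n n P n] transpose_mult[OF P M] P M PT sym by simp
    finally show ?thesis unfolding N_def transpose_smult KT .
  qed
  have UTN: "UT * N c = c \<cdot>\<^sub>m UT" for c
  proof -
    have "UT * N c = UT * (P * M * P) + UT * (c \<cdot>\<^sub>m K)"
      unfolding N_def by (rule mult_add_distrib_mat[OF UT], insert P M K, auto)
    also have "UT * (P * M * P) = ((UT * P) * M) * P"
      using assoc_mult_mat[symmetric, OF UT PM P] assoc_mult_mat[symmetric, OF UT P M] by simp
    also have "\<dots> = 0\<^sub>m j n" unfolding UTP using M P by simp
    also have "UT * (c \<cdot>\<^sub>m K) = c \<cdot>\<^sub>m UT" using mult_smult_distrib[OF UT K] UTK by simp
    finally show ?thesis using UT by simp
  qed
  have trK: "tr K = real j"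
    unfolding K_def using tr_comm[OF U UT] UTU tr_one by simp
  have trN: "tr (N c) = tr (P * M * P) + c * real j" for c
    unfolding N_def using tr_add[of "P * M * P" n "c \<cdot>\<^sub>m K"] tr_smult[OF K] trK P M K by simp
  have "\<exists>c a v. a \<noteq> c \<and> v \<in> carrier_vec n \<and> v \<noteq> 0\<^sub>v n \<and> N c *\<^sub>v v = a \<cdot>\<^sub>v v"
  proof (rule ccontr)
    assume neg: "\<not> ?thesis"
    have all: "tr (N c) = real n * c" for c
    proof -
      have symN: "(N c) $$ (i,k) = (N c) $$ (k,i)" if "i < n" "k < n" for i k
        using arg_cong[OF NT[of c], of "\<lambda>A. A $$ (k,i)"] that N[of c] by simp
      obtain as where cp: "char_poly (N c) = (\<Prod>a\<leftarrow>as. [:-a,1:])" and las: "length as = n"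
        using real_split[OF N symN] by blast
      have "\<forall>a\<in>set as. a = c"
      proof
        fix a assume "a \<in> set as"
        then have "poly (char_poly (N c)) a = 0" unfolding cp by (rule linear_poly_root)
        then have "eigenvalue (N c) a" using eigenvalue_root_char_poly[OF N] by simp
        then obtain v where "v \<in> carrier_vec n" "v \<noteq> 0\<^sub>v n" "N c *\<^sub>v v = a \<cdot>\<^sub>v v"
          unfolding eigenvalue_def eigenvector_def using N[of c] by auto
        thus "a = c" using neg by blast
      qed
      then have "as = replicate n c" using las replicate_length_same by metis
      then show ?thesis using tr_schur[OF N cp] by (simp add: sum_list_replicate)
    qed
    from all[of 0] all[of 1] trN[of 0] trN[of 1] have "j = n" by simp
    with lt show False unfolding j_def by simp
  qed
  then obtain c a v where ac: "a \<noteq> c" and v: "v \<in> carrier_vec n" and v0: "v \<noteq> 0\<^sub>v n"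
    and Nv: "N c *\<^sub>v v = a \<cdot>\<^sub>v v" by blast
  have UTv: "UT *\<^sub>v v = 0\<^sub>v j"
  proof -
    have "c \<cdot>\<^sub>v (UT *\<^sub>v v) = (c \<cdot>\<^sub>m UT) *\<^sub>v v" using smult_mat_vec[OF UT v] by simp
    also have "\<dots> = (UT * N c) *\<^sub>v v" using UTN by simp
    also have "\<dots> = UT *\<^sub>v (N c *\<^sub>v v)" by (rule assoc_mult_mat_vec[OF UT N v])
    also have "\<dots> = a \<cdot>\<^sub>v (UT *\<^sub>v v)" using Nv mult_mat_vec[OF UT v] by simp
    finally have eq: "c \<cdot>\<^sub>v (UT *\<^sub>v v) = a \<cdot>\<^sub>v (UT *\<^sub>v v)" .
    show ?thesis
    proof (rule eq_vecI)
      fix i assume "i < dim_vec (0\<^sub>v j :: real vec)"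
      hence i: "i < j" by simp
      have "c * (UT *\<^sub>v v) $ i = a * (UT *\<^sub>v v) $ i"
        using arg_cong[OF eq, of "\<lambda>w. w $ i"] i UT by simp
      with ac show "(UT *\<^sub>v v) $ i = 0\<^sub>v j $ i" using i by simp
    qed (insert UT, simp)
  qed
  have Kv: "K *\<^sub>v v = 0\<^sub>v n"
  proof -
    have "K *\<^sub>v v = U *\<^sub>v (UT *\<^sub>v v)" unfolding K_def by (rule assoc_mult_mat_vec[OF U UT v])
    thus ?thesis using UTv mat_vec_zero[OF U] by simp
  qed
  have Pv: "P *\<^sub>v v = v"
    unfolding P_def using minus_mult_distrib_mat_vec[OF I K v] Kv v unfolding I_def by simp
  have Mv': "M *\<^sub>v v \<in> carrier_vec n" using M v by simp
  have UTMv: "UT *\<^sub>v (M *\<^sub>v v) = 0\<^sub>v j"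
  proof -
    have "UT *\<^sub>v (M *\<^sub>v v) = (UT * M) *\<^sub>v v" by (rule assoc_mult_mat_vec[symmetric, OF UT M v])
    also have "\<dots> = D *\<^sub>v (UT *\<^sub>v v)" unfolding UTM by (rule assoc_mult_mat_vec[OF D UT v])
    finally show ?thesis using UTv mat_vec_zero[OF D] by simp
  qed
  have KMv: "K *\<^sub>v (M *\<^sub>v v) = 0\<^sub>v n"
  proof -
    have "K *\<^sub>v (M *\<^sub>v v) = U *\<^sub>v (UT *\<^sub>v (M *\<^sub>v v))" unfolding K_def by (rule assoc_mult_mat_vec[OF U UT Mv'])
    thus ?thesis using UTMv mat_vec_zero[OF U] by simp
  qed
  have PMv: "P *\<^sub>v (M *\<^sub>v v) = M *\<^sub>v v"
    unfolding P_def using minus_mult_distrib_mat_vec[OF I K Mv'] KMv Mv' unfolding I_def by simp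
  have "N c *\<^sub>v v = (P * M * P) *\<^sub>v v + (c \<cdot>\<^sub>m K) *\<^sub>v v"
    unfolding N_def by (rule add_mult_distrib_mat_vec, insert P M K v, auto)
  also have "(P * M * P) *\<^sub>v v = P *\<^sub>v (M *\<^sub>v (P *\<^sub>v v))"
    using assoc_mult_mat_vec[OF PM P v] assoc_mult_mat_vec[OF P M, of "P *\<^sub>v v"] P v by simp
  also have "\<dots> = M *\<^sub>v v" using Pv PMv by simp
  also have "(c \<cdot>\<^sub>m K) *\<^sub>v v = 0\<^sub>v n"
  proof -
    have "(c \<cdot>\<^sub>m K) *\<^sub>v v = c \<cdot>\<^sub>v (K *\<^sub>v v)" by (rule smult_mat_vec[OF K v])
    also have "\<dots> = 0\<^sub>v n" unfolding Kv by (rule eq_vecI) auto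
    finally show ?thesis .
  qed
  finally have Mv: "M *\<^sub>v v = a \<cdot>\<^sub>v v" using Nv Mv' by simp
  have orth: "us!i \<bullet> v = 0" if "i < j" for i
  proof -
    have "us!i \<in> carrier_vec n" using o that unfolding orthonormal_def j_def by auto
    hence "(UT *\<^sub>v v) $ i = us!i \<bullet> v" using that UT unfolding UT_def U_def j_def
      by (simp add: col_mat_of_cols)
    thus ?thesis using UTv that by simp
  qed
  have vv: "v \<bullet> v > 0" by (rule vec_self_pos[OF v v0])
  define u where "u = (1 / sqrt (v \<bullet> v)) \<cdot>\<^sub>v v"
  have u: "u \<in> carrier_vec n" unfolding u_def using v by simp
  have uu: "u \<bullet> u = 1" unfolding u_def using v vv
    by (simp add: real_sqrt_mult[symmetric])
  have usu: "us!i \<bullet> u = 0" if "i < j" for i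
  proof -
    have "us!i \<in> carrier_vec n" using o that unfolding orthonormal_def j_def by auto
    thus ?thesis unfolding u_def using orth[OF that] v by simp
  qed
  have uus: "u \<bullet> us!i = 0" if "i < j" for i
  proof -
    have "us!i \<in> carrier_vec n" using o that unfolding orthonormal_def j_def by auto
    thus ?thesis using usu[OF that] comm_scalar_prod[OF u] by metis
  qed
  have Mu: "M *\<^sub>v u = a \<cdot>\<^sub>v u" unfolding u_def using mult_mat_vec[OF M v] Mv v
    by (simp add: smult_smult_assoc mult.commute)
  have "orthonormal n (us @ [u])"
    unfolding orthonormal_def
  proof (intro conjI allI impI)
    show "set (us @ [u]) \<subseteq> carrier_vec n" using o u unfolding orthonormal_def by auto
    fix i k assume i: "i < length (us @ [u])" and k: "k < length (us @ [u])"
    show "(us @ [u]) ! i \<bullet> (us @ [u]) ! k = (if i = k then 1 else 0)"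
      using o i k usu uus uu unfolding orthonormal_def j_def
      by (cases "i < length us"; cases "k < length us") (auto simp: nth_append)
  qed
  moreover have "eigen_list M (us @ [u]) (ls @ [a])"
    using e Mu unfolding eigen_list_def by (auto simp: nth_append)
  ultimately show ?thesis by blast
qed

lemma spectral:
  assumes M: "M \<in> carrier_mat n n" and sym: "transpose_mat M = M"
  shows "\<exists>us ls. orthonormal n us \<and> eigen_list M us ls \<and> length us = n"
proof -
  have "\<forall>k\<le>n. \<exists>us ls. orthonormal n us \<and> eigen_list M us ls \<and> length us = k"
  proof (intro allI impI)
    fix k assume "k \<le> n"
    thus "\<exists>us ls. orthonormal n us \<and> eigen_list M us ls \<and> length us = k"
    proof (induct k)
      case 0
      show ?case by (rule exI[of _ "[]"], rule exI[of _ "[]"]) (auto simp: orthonormal_def eigen_list_def)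
    next
      case (Suc k)
      then obtain us ls where o: "orthonormal n us" and e: "eigen_list M us ls" and l: "length us = k" by auto
      from extend[OF M sym o e] l Suc(2) obtain u l where
        "orthonormal n (us @ [u])" "eigen_list M (us @ [u]) (ls @ [l])" by auto
      thus ?case using l by (intro exI[of _ "us @ [u]"] exI[of _ "ls @ [l]"]) auto
    qed
  qed
  thus ?thesis by auto
qed

lemma spectral_facts:
  assumes M: "M \<in> carrier_mat n n" and o: "orthonormal n us" and e: "eigen_list M us ls" and l: "length us = n"
  defines "U \<equiv> mat_of_cols n us" and "D \<equiv> mat n n (\<lambda>(a,b). if a = b then ls!a else (0::real))"
  shows "U * transpose_mat U = 1\<^sub>m n" "M = U * D * transpose_mat U"
    "char_poly M = (\<Prod>a\<leftarrow>ls. [:-a,1:])"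
proof -
  have U: "U \<in> carrier_mat n n" unfolding U_def using mat_of_cols_carrier(1)[of n us] l by simp
  have UT: "transpose_mat U \<in> carrier_mat n n" using U by simp
  have D: "D \<in> carrier_mat n n" unfolding D_def by simp
  have UTU: "transpose_mat U * U = 1\<^sub>m n" unfolding U_def using orth_UTU[OF o] l by simp
  show UUT: "U * transpose_mat U = 1\<^sub>m n" by (rule mat_mult_left_right_inverse[OF UT U UTU])
  have MU: "M * U = U * D" unfolding U_def D_def using eigen_MU[OF M o e] l by simp
  have "M = M * (U * transpose_mat U)" using UUT M by simp
  also have "\<dots> = (M * U) * transpose_mat U" by (rule assoc_mult_mat[symmetric, OF M U UT])
  finally show MD: "M = U * D * transpose_mat U" unfolding MU .
  have "similar_mat_wit M D U (transpose_mat U)"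
    unfolding similar_mat_wit_def Let_def using M D U UT UUT UTU MD by auto
  hence "similar_mat M D" unfolding similar_mat_def by blast
  hence "char_poly M = char_poly D" by (rule char_poly_similar)
  also have "\<dots> = (\<Prod>a\<leftarrow>diag_mat D. [:-a,1:])"
    by (rule char_poly_upper_triangular[OF D], auto simp: upper_triangular_def D_def)
  also have "diag_mat D = ls" using e l unfolding diag_mat_def D_def eigen_list_def
    by (intro nth_equalityI) auto
  finally show "char_poly M = (\<Prod>a\<leftarrow>ls. [:-a,1:])" .
qed

lemma proots_linear_prod: "proots (\<Prod>a\<leftarrow>ls. [:-a,1:]) = mset (ls :: real list)"
proof (induct ls)
  case (Cons a ls)
  have "(\<Prod>a\<leftarrow>ls. [:-a,1:]) \<noteq> 0" by (auto simp: prod_list_zero_iff)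
  hence "proots ([:-a,1:] * (\<Prod>a\<leftarrow>ls. [:-a,1:])) = proots [:-a,1:] + proots (\<Prod>a\<leftarrow>ls. [:-a,1:])"
    by (intro proots_mult) auto
  thus ?case using Cons by simp
qed simp

lemma comb:
  fixes L w :: "nat \<Rightarrow> real"
  assumes mono: "\<And>i j. i \<le> j \<Longrightarrow> j < n \<Longrightarrow> L j \<le> L i"
  and w0: "\<And>j. j < n \<Longrightarrow> 0 \<le> w j" and w1: "\<And>j. j < n \<Longrightarrow> w j \<le> 1"
  and sw: "(\<Sum>j<n. w j) = real k" and kn: "k \<le> n"
  shows "(\<Sum>j<n. L j * w j) \<le> (\<Sum>j<k. L j)"
proof (cases "n = 0")
  case True thus ?thesis using kn by simp
next
  case False
  define t where "t = L (min k (n - 1))"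
  have split: "{..<n} = {..<k} \<union> {k..<n}" using kn by auto
  have A: "(\<Sum>j<k. (L j - t) * w j) \<le> (\<Sum>j<k. (L j - t))"
  proof (rule sum_mono)
    fix j assume j: "j \<in> {..<k}"
    have "L j - t \<ge> 0" unfolding t_def using mono[of j "min k (n-1)"] j kn False by auto
    thus "(L j - t) * w j \<le> L j - t" using w1[of j] j kn by (simp add: mult_left_le)
  qed
  have B: "(\<Sum>j\<in>{k..<n}. (L j - t) * w j) \<le> 0"
  proof (rule sum_nonpos)
    fix j assume j: "j \<in> {k..<n}"
    have "L j - t \<le> 0" unfolding t_def using mono[of "min k (n-1)" j] j kn False by auto
    thus "(L j - t) * w j \<le> 0" using w0[of j] j by (simp add: mult_nonpos_nonneg)
  qed
  have "(\<Sum>j<n. L j * w j) = (\<Sum>j<n. (L j - t) * w j) + t * real k"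
    using sw by (simp add: algebra_simps sum.distrib sum_distrib_left[symmetric] sum_subtractf)
  also have "(\<Sum>j<n. (L j - t) * w j) = (\<Sum>j<k. (L j - t) * w j) + (\<Sum>j\<in>{k..<n}. (L j - t) * w j)"
    unfolding split by (rule sum.union_disjoint) auto
  also have "\<dots> + t * real k \<le> (\<Sum>j<k. (L j - t)) + t * real k" using A B by simp
  also have "\<dots> = (\<Sum>j<k. L j)" by (simp add: sum_subtractf)
  finally show ?thesis .
qed

lemma self_nonneg: "(v :: real vec) \<bullet> v \<ge> 0"
  unfolding scalar_prod_def by (rule sum_nonneg) simp

lemma sq_sum: "v \<in> carrier_vec n \<Longrightarrow> (v :: real vec) \<bullet> v = (\<Sum>i<n. (v$i)^2)"
  unfolding scalar_prod_def by (simp add: power2_eq_square lessThan_atLeast0)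

lemma bessel:
  assumes o: "orthonormal n xs" and u: "u \<in> carrier_vec n"
  shows "(\<Sum>i<length xs. (u \<bullet> xs!i)^2) \<le> u \<bullet> u"
proof -
  define k where "k = length xs"
  define X where "X = mat_of_cols n xs"
  have X: "X \<in> carrier_mat n k" unfolding X_def k_def by simp
  have XT: "transpose_mat X \<in> carrier_mat k n" using X by simp
  have XTX: "transpose_mat X * X = 1\<^sub>m k" unfolding X_def k_def by (rule orth_UTU[OF o])
  define c where "c = transpose_mat X *\<^sub>v u"
  have c: "c \<in> carrier_vec k" unfolding c_def using XT u by simp
  have ci: "c $ i = u \<bullet> xs!i" if "i < k" for i
  proof -
    have xi: "xs!i \<in> carrier_vec n" using o that unfolding orthonormal_def k_def by auto
    have "c $ i = xs!i \<bullet> u" unfolding c_def X_def using that xi XT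
      unfolding X_def k_def by (simp add: col_mat_of_cols)
    thus ?thesis using comm_scalar_prod[OF xi u] by simp
  qed
  define z where "z = X *\<^sub>v c"
  have z: "z \<in> carrier_vec n" unfolding z_def using X c by simp
  have uz: "u \<bullet> z = c \<bullet> c" unfolding z_def c_def
    using transpose_vec_mult_scalar[OF X c u] c_def by simp
  have zz: "z \<bullet> z = c \<bullet> c"
  proof -
    have "z \<bullet> z = (transpose_mat X *\<^sub>v z) \<bullet> c" using transpose_vec_mult_scalar[OF X c z] z_def by simp
    also have "transpose_mat X *\<^sub>v z = (transpose_mat X * X) *\<^sub>v c"
      unfolding z_def by (rule assoc_mult_mat_vec[symmetric, OF XT X c])
    also have "\<dots> = c" unfolding XTX using c by simp
    finally show ?thesis .
  qed
  have zu: "z \<bullet> u = c \<bullet> c" using uz comm_scalar_prod[OF z u] by simp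
  have "0 \<le> (u - z) \<bullet> (u - z)" by (rule self_nonneg)
  also have "\<dots> = u \<bullet> u - u \<bullet> z - (z \<bullet> u - z \<bullet> z)"
    using minus_scalar_prod_distrib[OF u z, of "u - z"] scalar_prod_minus_distrib[OF u u z]
      scalar_prod_minus_distrib[OF z u z] u z by simp
  also have "\<dots> = u \<bullet> u - c \<bullet> c" using uz zz zu by simp
  finally have "c \<bullet> c \<le> u \<bullet> u" by simp
  moreover have "c \<bullet> c = (\<Sum>i<k. (u \<bullet> xs!i)^2)" using sq_sum[OF c] ci by simp
  ultimately show ?thesis unfolding k_def by simp
qed

lemma quad_expand:
  assumes M: "M \<in> carrier_mat n n" and o: "orthonormal n us" and e: "eigen_list M us ls"
    and l: "length us = n" and x: "x \<in> carrier_vec n"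
  shows "x \<bullet> (M *\<^sub>v x) = (\<Sum>j<n. ls!j * (us!j \<bullet> x)^2)" "x \<bullet> x = (\<Sum>j<n. (us!j \<bullet> x)^2)"
proof -
  define U where "U = mat_of_cols n us"
  define D where "D = mat n n (\<lambda>(a,b). if a = b then ls!a else (0::real))"
  note sf = spectral_facts[OF M o e l, folded U_def D_def]
  have U: "U \<in> carrier_mat n n" unfolding U_def using mat_of_cols_carrier(1)[of n us] l by simp
  have UT: "transpose_mat U \<in> carrier_mat n n" using U by simp
  have D: "D \<in> carrier_mat n n" unfolding D_def by simp
  define y where "y = transpose_mat U *\<^sub>v x"
  have y: "y \<in> carrier_vec n" unfolding y_def using UT x by simp
  have yj: "y $ j = us!j \<bullet> x" if "j < n" for j
  proof -
    have "us!j \<in> carrier_vec n" using o that l unfolding orthonormal_def by auto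
    thus ?thesis unfolding y_def U_def using that l by (simp add: col_mat_of_cols)
  qed
  have UD: "U * D \<in> carrier_mat n n" using U D by simp
  have "M *\<^sub>v x = (U * D) *\<^sub>v y" unfolding y_def
    by (subst sf(2), rule assoc_mult_mat_vec[OF UD UT x])
  also have "\<dots> = U *\<^sub>v (D *\<^sub>v y)" by (rule assoc_mult_mat_vec[OF U D y])
  finally have Mx: "M *\<^sub>v x = U *\<^sub>v (D *\<^sub>v y)" .
  have Dy: "D *\<^sub>v y \<in> carrier_vec n" using D y by simp
  have "x \<bullet> (M *\<^sub>v x) = y \<bullet> (D *\<^sub>v y)" unfolding Mx
    using transpose_vec_mult_scalar[OF U Dy x] unfolding y_def[symmetric] by simp
  also have "\<dots> = (\<Sum>j\<in>{0..<n}. y$j * (D *\<^sub>v y) $ j)" unfolding scalar_prod_def using Dy by (simp only: carrier_vecD)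
  also have "\<dots> = (\<Sum>j\<in>{0..<n}. ls!j * (us!j \<bullet> x)^2)"
  proof (rule sum.cong)
    fix j assume j: "j \<in> {0..<n}"
    have "(D *\<^sub>v y) $ j = (\<Sum>k\<in>{0..<n}. (if j = k then ls!j else 0) * y$k)"
      using j y unfolding D_def by (simp add: scalar_prod_def)
    also have "\<dots> = (\<Sum>k\<in>{0..<n}. (if j = k then ls!j * y$k else 0))"
      by (rule sum.cong) auto
    also have "\<dots> = ls!j * y$j" using j by simp
    finally show "y$j * (D *\<^sub>v y) $ j = ls!j * (us!j \<bullet> x)^2" using yj j by (simp add: power2_eq_square)
  qed simp
  also have "\<dots> = (\<Sum>j<n. ls!j * (us!j \<bullet> x)^2)" by (simp only: lessThan_atLeast0)
  finally show "x \<bullet> (M *\<^sub>v x) = (\<Sum>j<n. ls!j * (us!j \<bullet> x)^2)" .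
  have "x = (U * transpose_mat U) *\<^sub>v x" using sf(1) x by simp
  also have "\<dots> = U *\<^sub>v y" unfolding y_def by (rule assoc_mult_mat_vec[OF U UT x])
  finally have xU: "x = U *\<^sub>v y" .
  have "x \<bullet> x = x \<bullet> (U *\<^sub>v y)" using xU by metis
  also have "\<dots> = y \<bullet> y" using transpose_vec_mult_scalar[OF U y x] unfolding y_def[symmetric] by simp
  finally have "x \<bullet> x = y \<bullet> y" .
  also have "\<dots> = (\<Sum>j<n. (us!j \<bullet> x)^2)" using sq_sum[OF y] yj by simp
  finally show "x \<bullet> x = (\<Sum>j<n. (us!j \<bullet> x)^2)" .
qed

lemma sum_take: "k \<le> length L \<Longrightarrow> sum_list (take k L) = (\<Sum>j<k. L!j)"
  by (simp add: sum_list_sum_nth lessThan_atLeast0 min_absorb2)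

lemma ky_fan:
  assumes M: "M \<in> carrier_mat n n" and sym: "transpose_mat M = M"
  and o: "orthonormal n xs"
  shows "(\<Sum>i<length xs. xs!i \<bullet> (M *\<^sub>v xs!i)) \<le> S_k (length xs) M"
proof -
  obtain us ls where o2: "orthonormal n us" and e: "eigen_list M us ls" and l: "length us = n"
    using spectral[OF M sym] by blast
  have ll: "length ls = n" using e l unfolding eigen_list_def by simp
  have cp: "char_poly M = (\<Prod>a\<leftarrow>ls. [:-a,1:])" by (rule spectral_facts(3)[OF M o2 e l])
  define S where "S = sorted_list_of_multiset (proots (char_poly M))"
  define L where "L = eigenvalues_desc M"
  have LS: "L = rev S" unfolding L_def S_def eigenvalues_desc_def ..
  have mL: "mset L = mset ls" unfolding LS S_def cp proots_linear_prod by simp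
  have lL: "length L = n" using mset_eq_length[OF mL] ll by simp
  have lS: "length S = n" using lL LS by simp
  obtain p where p: "p permutes {..<length ls}" "permute_list p ls = L"
    using mset_eq_permutation[OF mL] by blast
  have p': "p permutes {..<n}" using p(1) ll by simp
  have Lj: "L!j = ls!(p j)" if "j < n" for j
    using permute_list_nth[OF p(1)] that ll p(2) by auto
  have pj: "p j < n" if "j < n" for j using permutes_in_image[OF p'] that by simp
  have mono: "L!j \<le> L!i" if "i \<le> j" "j < n" for i j
  proof -
    have "L!j = S!(n - Suc j)" "L!i = S!(n - Suc i)" using that lS unfolding LS by (auto simp: rev_nth)
    moreover have "S!(n - Suc j) \<le> S!(n - Suc i)"
      by (rule sorted_nth_mono, unfold S_def, simp, insert that lS, auto simp: S_def)
    ultimately show ?thesis by simp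
  qed
  define k where "k = length xs"
  have xi: "xs!i \<in> carrier_vec n" if "i < k" for i using o that unfolding orthonormal_def k_def by auto
  have xx: "xs!i \<bullet> xs!i = 1" if "i < k" for i using o that unfolding orthonormal_def k_def by auto
  have ui: "us!j \<in> carrier_vec n" "us!j \<bullet> us!j = 1" if "j < n" for j
    using o2 that l unfolding orthonormal_def by auto
  define w where "w j = (\<Sum>i<k. (us!(p j) \<bullet> xs!i)^2)" for j
  have quad: "xs!i \<bullet> (M *\<^sub>v xs!i) = (\<Sum>j<n. L!j * (us!(p j) \<bullet> xs!i)^2)" if "i < k" for i
  proof -
    have "xs!i \<bullet> (M *\<^sub>v xs!i) = (\<Sum>j<n. ls!j * (us!j \<bullet> xs!i)^2)"
      by (rule quad_expand(1)[OF M o2 e l xi[OF that]])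
    also have "\<dots> = (\<Sum>j<n. ls!(p j) * (us!(p j) \<bullet> xs!i)^2)"
      using sum.permute[OF p', of "\<lambda>j. ls!j * (us!j \<bullet> xs!i)^2"] by simp
    also have "\<dots> = (\<Sum>j<n. L!j * (us!(p j) \<bullet> xs!i)^2)" by (rule sum.cong, auto simp: Lj)
    finally show ?thesis .
  qed
  have norm: "(\<Sum>j<n. (us!(p j) \<bullet> xs!i)^2) = 1" if "i < k" for i
  proof -
    have "1 = xs!i \<bullet> xs!i" using xx[OF that] by simp
    also have "\<dots> = (\<Sum>j<n. (us!j \<bullet> xs!i)^2)"
      by (rule quad_expand(2)[OF M o2 e l xi[OF that]])
    also have "\<dots> = (\<Sum>j<n. (us!(p j) \<bullet> xs!i)^2)"
      using sum.permute[OF p', of "\<lambda>j. (us!j \<bullet> xs!i)^2"] by simp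
    finally show ?thesis by simp
  qed
  have lhs: "(\<Sum>i<k. xs!i \<bullet> (M *\<^sub>v xs!i)) = (\<Sum>j<n. L!j * w j)"
  proof -
    have "(\<Sum>i<k. xs!i \<bullet> (M *\<^sub>v xs!i)) = (\<Sum>i<k. \<Sum>j<n. L!j * (us!(p j) \<bullet> xs!i)^2)"
      by (rule sum.cong, auto simp: quad)
    also have "\<dots> = (\<Sum>j<n. \<Sum>i<k. L!j * (us!(p j) \<bullet> xs!i)^2)" by (rule sum.swap)
    also have "\<dots> = (\<Sum>j<n. L!j * w j)" unfolding w_def by (simp add: sum_distrib_left)
    finally show ?thesis .
  qed
  have w0: "0 \<le> w j" for j unfolding w_def by (rule sum_nonneg) simp
  have w1: "w j \<le> 1" if "j < n" for j
  proof -
    have "w j \<le> us!(p j) \<bullet> us!(p j)" unfolding w_def k_def by (rule bessel[OF o ui(1)[OF pj[OF that]]])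
    thus ?thesis using ui(2)[OF pj[OF that]] by simp
  qed
  have sw: "(\<Sum>j<n. w j) = real k"
  proof -
    have "(\<Sum>j<n. w j) = (\<Sum>i<k. \<Sum>j<n. (us!(p j) \<bullet> xs!i)^2)" unfolding w_def by (rule sum.swap)
    also have "\<dots> = (\<Sum>i<k. 1)" by (rule sum.cong, auto simp: norm)
    finally show ?thesis by simp
  qed
  have kn: "k \<le> n"
  proof -
    have "(\<Sum>j<n. w j) \<le> (\<Sum>j<n. 1)" by (rule sum_mono, simp add: w1)
    thus ?thesis using sw by simp
  qed
  have "(\<Sum>j<n. L!j * w j) \<le> (\<Sum>j<k. L!j)"
    by (rule comb[of n "\<lambda>j. L!j" w k], auto intro: mono w0 w1 sw kn)
  also have "\<dots> = S_k k M" unfolding S_k_def L_def[symmetric] using sum_take[of k L] kn lL by simp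
  finally show ?thesis using lhs unfolding k_def by simp
qed



lemma delta2:
  fixes c :: real and n w i u :: nat
  assumes "w < n"
  shows "(\<Sum>j<n. (if i = u \<and> j = w then c else 0)) = (if i = u then c else 0)"
proof (cases "i = u")
  case True
  thus ?thesis using assms by (simp add: sum.delta)
qed simp

lemma pair_sum:
  fixes f :: "nat \<Rightarrow> real"
  assumes uw: "u \<noteq> w" "u < n" "w < n"
  shows "(\<Sum>i<n. \<Sum>j<n. (if {u,w} = {i,j} then f i * f j else 0)) = 2 * f u * f w"
proof -
  have inner: "(\<Sum>j<n. (if {u,w} = {i,j} then f i * f j else 0)) =
      (if i = u then f u * f w else 0) + (if i = w then f w * f u else 0)" for i
  proof -
    have "(\<Sum>j<n. (if {u,w} = {i,j} then f i * f j else 0)) =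
        (\<Sum>j<n. (if i = u \<and> j = w then f u * f w else 0) + (if i = w \<and> j = u then f w * f u else 0))"
    proof (rule sum.cong)
      fix j
      show "(if {u,w} = {i,j} then f i * f j else 0) = (if i = u \<and> j = w then f u * f w else 0) + (if i = w \<and> j = u then f w * f u else 0)"
        using uw(1) unfolding doubleton_eq_iff by auto
    qed simp
    also have "\<dots> = (\<Sum>j<n. (if i = u \<and> j = w then f u * f w else 0)) + (\<Sum>j<n. (if i = w \<and> j = u then f w * f u else 0))"
      by (rule sum.distrib)
    also have "\<dots> = (if i = u then f u * f w else 0) + (if i = w then f w * f u else 0)"
      using delta2[OF uw(3), of i u] delta2[OF uw(2), of i w] by simp
    finally show ?thesis .
  qed
  have "(\<Sum>i<n. \<Sum>j<n. (if {u,w} = {i,j} then f i * f j else 0)) =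
     (\<Sum>i<n. (if i = u then f u * f w else 0)) + (\<Sum>i<n. (if i = w then f w * f u else 0))"
    unfolding inner by (rule sum.distrib)
  also have "\<dots> = f u * f w + f w * f u" using uw by simp
  finally show ?thesis by simp
qed

lemma finite_E: "simple_graph n E \<Longrightarrow> finite E"
proof -
  assume sg: "simple_graph n E"
  have "E \<subseteq> Pow {0..<n}" using sg unfolding simple_graph_def by auto
  thus ?thesis by (rule finite_subset) simp
qed

lemma quad_graph:
  assumes sg: "simple_graph n E" and x: "x \<in> carrier_vec n"
  shows "x \<bullet> (A_alpha \<alpha> n E *\<^sub>v x) = (\<Sum>e\<in>E. \<alpha> * (\<Sum>v\<in>e. (x$v)^2) + (1-\<alpha>) * ((\<Sum>v\<in>e. x$v)^2 - (\<Sum>v\<in>e. (x$v)^2)))"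
proof -
  have fin: "finite E" by (rule finite_E[OF sg])
  have esub: "e \<subseteq> {..<n}" if "e \<in> E" for e using sg that unfolding simple_graph_def by auto
  define f where "f i = x $ i" for i
  have row: "(A_alpha \<alpha> n E *\<^sub>v x) $ i = \<alpha> * real (degree E i) * f i + (1-\<alpha>) * (\<Sum>j<n. (if {i,j} \<in> E then f j else 0))"
    if "i < n" for i
  proof -
    have "(A_alpha \<alpha> n E *\<^sub>v x) $ i = (\<Sum>j\<in>{0..<n}. (\<alpha> * (if i = j then real (degree E i) else 0) + (1-\<alpha>) * (if {i,j} \<in> E then 1 else 0)) * f j)"
      using that x unfolding A_alpha_def deg_matrix_def adj_matrix_def f_def by (simp add: scalar_prod_def)
    also have "\<dots> = (\<Sum>j\<in>{0..<n}. \<alpha> * (if i = j then real (degree E i) * f j else 0) + (1-\<alpha>) * (if {i,j} \<in> E then f j else 0))"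
      by (rule sum.cong) (auto simp: algebra_simps)
    also have "\<dots> = \<alpha> * real (degree E i) * f i + (1-\<alpha>) * (\<Sum>j<n. (if {i,j} \<in> E then f j else 0))"
      using that by (simp add: sum.distrib sum_distrib_left[symmetric] lessThan_atLeast0)
    finally show ?thesis .
  qed
  have MA: "A_alpha \<alpha> n E \<in> carrier_mat n n" unfolding A_alpha_def deg_matrix_def adj_matrix_def by simp
  have MA: "A_alpha \<alpha> n E \<in> carrier_mat n n" unfolding A_alpha_def deg_matrix_def adj_matrix_def by simp
  have "x \<bullet> (A_alpha \<alpha> n E *\<^sub>v x) = (\<Sum>i\<in>{0..<n}. f i * (A_alpha \<alpha> n E *\<^sub>v x) $ i)"
    unfolding scalar_prod_def f_def using MA by (simp del: index_mult_mat_vec)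
  also have "\<dots> = (\<Sum>i\<in>{0..<n}. \<alpha> * (real (degree E i) * (f i)^2) + (1-\<alpha>) * (\<Sum>j<n. (if {i,j} \<in> E then f i * f j else 0)))"
  proof (rule sum.cong)
    fix i assume i: "i \<in> {0..<n}"
    have eq: "f i * (\<Sum>j<n. (if {i,j} \<in> E then f j else 0)) = (\<Sum>j<n. (if {i,j} \<in> E then f i * f j else 0))"
      by (subst sum_distrib_left, rule sum.cong, auto)
    have r: "(A_alpha \<alpha> n E *\<^sub>v x) $ i = \<alpha> * real (degree E i) * f i + (1-\<alpha>) * (\<Sum>j<n. (if {i,j} \<in> E then f j else 0))"
      using row[of i] i by simp
    have "f i * (A_alpha \<alpha> n E *\<^sub>v x) $ i = \<alpha> * (real (degree E i) * (f i)^2) + (1-\<alpha>) * (f i * (\<Sum>j<n. (if {i,j} \<in> E then f j else 0)))"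
      unfolding r by (simp add: algebra_simps power2_eq_square)
    thus "f i * (A_alpha \<alpha> n E *\<^sub>v x) $ i = \<alpha> * (real (degree E i) * (f i)^2) + (1-\<alpha>) * (\<Sum>j<n. (if {i,j} \<in> E then f i * f j else 0))"
      unfolding eq .
  qed simp
  also have "\<dots> = \<alpha> * (\<Sum>i<n. real (degree E i) * (f i)^2) + (1-\<alpha>) * (\<Sum>i<n. \<Sum>j<n. (if {i,j} \<in> E then f i * f j else 0))"
    by (simp add: sum.distrib sum_distrib_left lessThan_atLeast0)
  also have "(\<Sum>i<n. real (degree E i) * (f i)^2) = (\<Sum>e\<in>E. \<Sum>v\<in>e. (f v)^2)"
  proof -
    have "(\<Sum>i<n. real (degree E i) * (f i)^2) = (\<Sum>i<n. \<Sum>e\<in>E. (if i \<in> e then (f i)^2 else 0))"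
    proof (rule sum.cong)
      fix i
      have deg: "real (degree E i) = (\<Sum>e\<in>E. (if i \<in> e then 1 else 0))"
        unfolding degree_def using fin by (simp add: sum.If_cases Int_def conj_commute)
      have "real (degree E i) * (f i)^2 = (\<Sum>e\<in>E. (if i \<in> e then 1 else 0) * (f i)^2)"
        unfolding deg sum_distrib_right ..
      also have "\<dots> = (\<Sum>e\<in>E. (if i \<in> e then (f i)^2 else 0))" by (rule sum.cong) auto
      finally show "real (degree E i) * (f i)^2 = (\<Sum>e\<in>E. (if i \<in> e then (f i)^2 else 0))" .
    qed simp
    also have "\<dots> = (\<Sum>e\<in>E. \<Sum>i<n. (if i \<in> e then (f i)^2 else 0))" by (rule sum.swap)
    also have "\<dots> = (\<Sum>e\<in>E. \<Sum>v\<in>e. (f v)^2)"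
    proof (rule sum.cong)
      fix e assume e: "e \<in> E"
      have "(\<Sum>i<n. (if i \<in> e then (f i)^2 else 0)) = (\<Sum>i\<in>{..<n} \<inter> e. (f i)^2)"
        by (simp add: sum.inter_restrict)
      also have "{..<n} \<inter> e = e" using esub[OF e] by auto
      finally show "(\<Sum>i<n. (if i \<in> e then (f i)^2 else 0)) = (\<Sum>v\<in>e. (f v)^2)" .
    qed simp
    finally show ?thesis .
  qed
  also have "(\<Sum>i<n. \<Sum>j<n. (if {i,j} \<in> E then f i * f j else 0)) = (\<Sum>e\<in>E. (\<Sum>v\<in>e. f v)^2 - (\<Sum>v\<in>e. (f v)^2))"
  proof -
    have ind: "(if {i,j} \<in> E then f i * f j else 0) = (\<Sum>e\<in>E. (if e = {i,j} then f i * f j else 0))" for i j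
      using fin by (simp add: sum.delta')
    have "(\<Sum>i<n. \<Sum>j<n. (if {i,j} \<in> E then f i * f j else 0)) = (\<Sum>i<n. \<Sum>j<n. \<Sum>e\<in>E. (if e = {i,j} then f i * f j else 0))"
      unfolding ind ..
    also have "\<dots> = (\<Sum>i<n. \<Sum>e\<in>E. \<Sum>j<n. (if e = {i,j} then f i * f j else 0))"
      by (rule sum.cong, simp, rule sum.swap)
    also have "\<dots> = (\<Sum>e\<in>E. \<Sum>i<n. \<Sum>j<n. (if e = {i,j} then f i * f j else 0))" by (rule sum.swap)
    also have "\<dots> = (\<Sum>e\<in>E. (\<Sum>v\<in>e. f v)^2 - (\<Sum>v\<in>e. (f v)^2))"
    proof (rule sum.cong)
      fix e assume e: "e \<in> E"
      then obtain u w where uw: "e = {u,w}" "u \<noteq> w" "u < n" "w < n" using sg unfolding simple_graph_def by blast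
      have "(\<Sum>i<n. \<Sum>j<n. (if e = {i,j} then f i * f j else 0)) = 2 * f u * f w"
        unfolding uw(1) by (rule pair_sum[OF uw(2-4)])
      also have "\<dots> = (\<Sum>v\<in>e. f v)^2 - (\<Sum>v\<in>e. (f v)^2)" unfolding uw(1) using uw(2)
        by (simp add: power2_eq_square algebra_simps)
      finally show "(\<Sum>i<n. \<Sum>j<n. (if e = {i,j} then f i * f j else 0)) = (\<Sum>v\<in>e. f v)^2 - (\<Sum>v\<in>e. (f v)^2)" .
    qed simp
    finally show ?thesis .
  qed
  finally show ?thesis unfolding f_def by (simp add: sum_distrib_left sum.distrib)
qed


lemma A_carrier: "A_alpha \<alpha> n E \<in> carrier_mat n n"
  unfolding A_alpha_def deg_matrix_def adj_matrix_def by simp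

lemma A_sym: "transpose_mat (A_alpha \<alpha> n E) = A_alpha \<alpha> n E"
  by (rule eq_matI, auto simp: A_alpha_def deg_matrix_def adj_matrix_def insert_commute)

lemma quad_graph_fun:
  assumes sg: "simple_graph n E"
  shows "vec n g \<bullet> (A_alpha \<alpha> n E *\<^sub>v vec n g) = (\<Sum>e\<in>E. \<alpha> * (\<Sum>v\<in>e. (g v)^2) + (1-\<alpha>) * ((\<Sum>v\<in>e. g v)^2 - (\<Sum>v\<in>e. (g v)^2)))"
proof -
  have esub: "e \<subseteq> {..<n}" if "e \<in> E" for e using sg that unfolding simple_graph_def by auto
  show ?thesis unfolding quad_graph[OF sg vec_carrier]
  proof (rule sum.cong)
    fix e assume e: "e \<in> E"
    have a: "(\<Sum>v\<in>e. (vec n g $ v)^2) = (\<Sum>v\<in>e. (g v)^2)" by (rule sum.cong, insert esub[OF e], auto)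
    have b: "(\<Sum>v\<in>e. vec n g $ v) = (\<Sum>v\<in>e. g v)" by (rule sum.cong, insert esub[OF e], auto)
    show "\<alpha> * (\<Sum>v\<in>e. (vec n g $ v)^2) + (1-\<alpha>) * ((\<Sum>v\<in>e. vec n g $ v)^2 - (\<Sum>v\<in>e. (vec n g $ v)^2)) =
      \<alpha> * (\<Sum>v\<in>e. (g v)^2) + (1-\<alpha>) * ((\<Sum>v\<in>e. g v)^2 - (\<Sum>v\<in>e. (g v)^2))" unfolding a b ..
  qed simp
qed

lemma edge_XY:
  assumes sg: "simple_graph n E" and bp: "bipartition n E X Y" and e: "e \<in> E"
  shows "\<exists>u w. e = {u,w} \<and> u \<in> X \<and> w \<in> Y \<and> u \<notin> Y \<and> w \<notin> X \<and> u \<noteq> w \<and> u < n \<and> w < n"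
proof -
  obtain u w where uw: "e = {u,w}" "u \<noteq> w" "u < n" "w < n" using sg e unfolding simple_graph_def by blast
  have cX: "card (e \<inter> X) = 1" and cY: "card (e \<inter> Y) = 1" and XY: "X \<union> Y = {0..<n}" "X \<inter> Y = {}"
    using bp e unfolding bipartition_def by auto
  have uXY: "u \<in> X \<or> u \<in> Y" and wXY: "w \<in> X \<or> w \<in> Y" using XY uw by auto
  have nb: "\<not> (u \<in> X \<and> w \<in> X)"
  proof
    assume "u \<in> X \<and> w \<in> X"
    hence "e \<inter> X = {u,w}" using uw by auto
    thus False using cX uw by simp
  qed
  have nb2: "\<not> (u \<in> Y \<and> w \<in> Y)"
  proof
    assume "u \<in> Y \<and> w \<in> Y"
    hence "e \<inter> Y = {u,w}" using uw by auto
    thus False using cY uw by simp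
  qed
  show ?thesis
  proof (cases "u \<in> X")
    case True
    hence "w \<in> Y" "u \<notin> Y" "w \<notin> X" using nb wXY XY by auto
    thus ?thesis using True uw by blast
  next
    case False
    hence "u \<in> Y" "w \<in> X" "w \<notin> Y" using uXY nb2 wXY by auto
    thus ?thesis using False uw by (intro exI[of _ w] exI[of _ u]) auto
  qed
qed

lemma matching_sub:
  assumes fin: "finite E" and k: "k \<le> matching_number E + 1"
  shows "\<exists>Mt. Mt \<subseteq> E \<and> (\<forall>e\<in>Mt. \<forall>f\<in>Mt. e \<noteq> f \<longrightarrow> e \<inter> f = {}) \<and> card Mt = k - 1 \<and> finite Mt"
proof -
  have sub: "{M. is_matching E M} \<subseteq> Pow E" unfolding is_matching_def by auto
  have finS: "finite {M. is_matching E M}" by (rule finite_subset[OF sub], simp add: fin)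
  have "is_matching E {}" unfolding is_matching_def by simp
  hence ne: "{M. is_matching E M} \<noteq> {}" by blast
  have "matching_number E \<in> card ` {M. is_matching E M}"
    unfolding matching_number_def by (rule Max_in, simp add: finS, insert ne, blast)
  then obtain Mx where Mx: "is_matching E Mx" "card Mx = matching_number E" by auto
  have "k - 1 \<le> card Mx" using Mx(2) k by simp
  then obtain Mt where Mt: "Mt \<subseteq> Mx" "card Mt = k - 1" "finite Mt"
    by (rule obtain_subset_with_card_n)
  have "Mt \<subseteq> E" using Mt(1) Mx(1) unfolding is_matching_def by blast
  moreover have "\<forall>e\<in>Mt. \<forall>f\<in>Mt. e \<noteq> f \<longrightarrow> e \<inter> f = {}" using Mt(1) Mx(1) unfolding is_matching_def by blast
  ultimately show ?thesis using Mt by blast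
qed


lemma sum_set_nth: "distinct xs \<Longrightarrow> sum f (set xs) = (\<Sum>i<length xs. f (xs!i))"
  by (simp add: sum_list_distinct_conv_sum_set[symmetric] sum_list_sum_nth lessThan_atLeast0)

lemma dot_vec: "vec n g \<bullet> vec n h = (\<Sum>i\<in>{0..<n}. g i * (h i :: real))"
  by (simp add: scalar_prod_def)

lemma sum_supp:
  fixes n :: nat and F :: "nat \<Rightarrow> real"
  assumes "e \<subseteq> {0..<n}"
  shows "(\<Sum>i\<in>{0..<n}. (if i \<in> e then F i else (0::real))) = (\<Sum>i\<in>e. F i)"
proof -
  have "(\<Sum>i\<in>{0..<n}. (if i \<in> e then F i else 0)) = (\<Sum>i\<in>{0..<n} \<inter> e. F i)"
    by (rule sum.inter_restrict[symmetric]) simp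
  also have "{0..<n} \<inter> e = e" using assms by auto
  finally show ?thesis .
qed

lemma trivial_case:
  assumes sg: "simple_graph n E" and n1: "n \<ge> 1" and E: "E = {}" and k1: "1 \<le> k" and k: "k \<le> matching_number E + 1"
  shows "S_k k (A_alpha \<alpha> n E) \<ge>
    \<alpha> * real (card E) / 2 * (1 / real (card X) + 1 / real (card Y))
    + (1 - \<alpha>) * real (card E) / sqrt (real (card X) * real (card Y))
    + (real k - 1) * (\<alpha> - 2 * (1 - \<alpha>) * sqrt (real (card X) * real (card Y))
                                / (real (card X) + real (card Y)))"
proof -
  have "{M. is_matching E M} = {{}}" unfolding is_matching_def E by auto
  hence "matching_number E = 0" unfolding matching_number_def by simp
  hence kk: "k = 1" using k k1 by simp
  define x where "x = vec n (\<lambda>i. if i = 0 then 1 else (0::real))"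
  have aux: "\<And>i. (if i = 0 then 1 else 0) * (if i = 0 then 1 else (0::real)) = (if i = 0 then 1 else 0)" by simp
  have xx: "x \<bullet> x = 1" unfolding x_def dot_vec aux using n1 by (simp add: sum.delta)
  have o: "orthonormal n [x]" unfolding orthonormal_def using xx by (auto simp: x_def)
  have "(\<Sum>i<length [x]. [x]!i \<bullet> (A_alpha \<alpha> n E *\<^sub>v [x]!i)) \<le> S_k (length [x]) (A_alpha \<alpha> n E)"
    by (rule ky_fan[OF A_carrier A_sym o])
  moreover have "x \<bullet> (A_alpha \<alpha> n E *\<^sub>v x) = 0"
  proof -
    have "x \<bullet> (A_alpha \<alpha> n E *\<^sub>v x) = (\<Sum>e\<in>E. \<alpha> * (\<Sum>v\<in>e. ((\<lambda>i. if i = 0 then 1 else (0::real)) v)^2) + (1-\<alpha>) * ((\<Sum>v\<in>e. (\<lambda>i. if i = 0 then 1 else (0::real)) v)^2 - (\<Sum>v\<in>e. ((\<lambda>i. if i = 0 then 1 else (0::real)) v)^2)))"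
      unfolding x_def by (rule quad_graph_fun[OF sg])
    thus ?thesis using E by simp
  qed
  ultimately have "0 \<le> S_k 1 (A_alpha \<alpha> n E)" by simp
  thus ?thesis using kk E by simp
qed


lemma main_case:
  assumes sg: "simple_graph n E" and bp: "bipartition n E X Y" and E: "E \<noteq> {}"
    and a0: "0 \<le> \<alpha>" and a1: "\<alpha> \<le> 1" and k1: "1 \<le> k" and k: "k \<le> matching_number E + 1"
  shows "S_k k (A_alpha \<alpha> n E) \<ge>
    \<alpha> * real (card E) / 2 * (1 / real (card X) + 1 / real (card Y))
    + (1 - \<alpha>) * real (card E) / sqrt (real (card X) * real (card Y))
    + (real k - 1) * (\<alpha> - 2 * (1 - \<alpha>) * sqrt (real (card X) * real (card Y))
                                / (real (card X) + real (card Y)))"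
proof -
  have fin: "finite E" by (rule finite_E[OF sg])
  have XY: "X \<union> Y = {0..<n}" "X \<inter> Y = {}" using bp unfolding bipartition_def by auto
  have finX: "finite X" and finY: "finite Y" using XY(1) by (metis finite_Un finite_atLeastLessThan)+
  obtain e0 where e0: "e0 \<in> E" using E by auto
  from edge_XY[OF sg bp e0] have "X \<noteq> {}" "Y \<noteq> {}" by auto
  hence sX: "card X > 0" and sY: "card Y > 0" using finX finY by auto
  define s where "s = real (card X)"
  define t where "t = real (card Y)"
  have s: "s > 0" and t: "t > 0" unfolding s_def t_def using sX sY by auto
  define p0 where "p0 = sqrt (1 / (2 * s))"
  define q0 where "q0 = sqrt (1 / (2 * t))"
  define p1 where "p1 = sqrt (s / (s + t))"
  define q1 where "q1 = sqrt (t / (s + t))"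
  have p0sq: "p0 * p0 = 1 / (2 * s)" unfolding p0_def using s by simp
  have q0sq: "q0 * q0 = 1 / (2 * t)" unfolding q0_def using t by simp
  have p1sq: "p1 * p1 = s / (s + t)" unfolding p1_def using s t by simp
  have q1sq: "q1 * q1 = t / (s + t)" unfolding q1_def using s t by simp
  have pq0: "p0 * q0 = 1 / (2 * sqrt (s * t))"
  proof -
    have "p0 * q0 = sqrt (1 / (2 * s) * (1 / (2 * t)))" unfolding p0_def q0_def real_sqrt_mult ..
    also have "1 / (2 * s) * (1 / (2 * t)) = 1 / (4 * (s * t))" by simp
    also have "sqrt (1 / (4 * (s * t))) = 1 / (sqrt 4 * sqrt (s * t))" by (simp add: real_sqrt_divide real_sqrt_mult)
    also have "sqrt 4 = (2::real)" by (metis real_sqrt_abs abs_numeral power2_eq_square numeral_times_numeral semiring_norm(12) semiring_norm(13) real_sqrt_pow2 zero_le_numeral real_sqrt_mult_self)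
    finally show ?thesis .
  qed
  have pq1: "p1 * q1 = sqrt (s * t) / (s + t)"
  proof -
    have "p1 * q1 = sqrt (s / (s + t) * (t / (s + t)))" unfolding p1_def q1_def real_sqrt_mult ..
    also have "s / (s + t) * (t / (s + t)) = (s * t) / (s + t)^2" by (simp add: power2_eq_square)
    also have "sqrt ((s * t) / (s + t)^2) = sqrt (s * t) / (s + t)" using s t by (simp add: real_sqrt_divide)
    finally show ?thesis .
  qed
  have pp: "p0 * p1 = q0 * q1"
    unfolding p0_def p1_def q0_def q1_def
    using real_sqrt_mult[of "1 / (2 * s)" "s / (s + t)"] real_sqrt_mult[of "1 / (2 * t)" "t / (s + t)"] s t by fastforce
  define x0 where "x0 v = (if v \<in> X then p0 else q0)" for v
  define ye where "ye e v = (if v \<in> e then (if v \<in> X then p1 else - q1) else 0)" for e v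
  obtain Mt where Mt: "Mt \<subseteq> E" "\<forall>e\<in>Mt. \<forall>f\<in>Mt. e \<noteq> f \<longrightarrow> e \<inter> f = {}" "card Mt = k - 1" "finite Mt"
    using matching_sub[OF fin k] by blast
  obtain es where es: "set es = Mt" "distinct es" using finite_distinct_list[OF Mt(4)] by blast
  have les: "length es = k - 1" using distinct_card[OF es(2)] es(1) Mt(3) by simp
  have esub: "e \<subseteq> {0..<n}" if "e \<in> E" for e using sg that unfolding simple_graph_def by auto
  have edge: "\<exists>u w. e = {u,w} \<and> u \<in> X \<and> w \<in> Y \<and> u \<notin> Y \<and> w \<notin> X \<and> u \<noteq> w \<and> u < n \<and> w < n"
    if "e \<in> E" for e using edge_XY[OF sg bp that] by blast
  have x0x0: "vec n x0 \<bullet> vec n x0 = 1"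
  proof -
    have "vec n x0 \<bullet> vec n x0 = (\<Sum>i\<in>X \<union> Y. x0 i * x0 i)" unfolding dot_vec XY(1) ..
    also have "\<dots> = (\<Sum>i\<in>X. x0 i * x0 i) + (\<Sum>i\<in>Y. x0 i * x0 i)" by (rule sum.union_disjoint[OF finX finY XY(2)])
    also have "(\<Sum>i\<in>X. x0 i * x0 i) = (\<Sum>i\<in>X. p0 * p0)" by (rule sum.cong) (auto simp: x0_def)
    also have "(\<Sum>i\<in>Y. x0 i * x0 i) = (\<Sum>i\<in>Y. q0 * q0)" by (rule sum.cong) (use XY(2) in \<open>auto simp: x0_def\<close>)
    finally have "vec n x0 \<bullet> vec n x0 = s * (p0 * p0) + t * (q0 * q0)" unfolding s_def t_def by simp
    thus ?thesis unfolding p0sq q0sq using s t by simp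
  qed
  have yy: "vec n (ye e) \<bullet> vec n (ye e) = 1" if e: "e \<in> E" for e
  proof -
    obtain u w where uw: "e = {u,w}" "u \<in> X" "w \<in> Y" "u \<notin> Y" "w \<notin> X" "u \<noteq> w" using edge[OF e] by blast
    have "vec n (ye e) \<bullet> vec n (ye e) = (\<Sum>i\<in>{0..<n}. (if i \<in> e then ye e i * ye e i else 0))"
      unfolding dot_vec by (rule sum.cong) (auto simp: ye_def)
    also have "\<dots> = (\<Sum>i\<in>e. ye e i * ye e i)" by (rule sum_supp[OF esub[OF e]])
    also have "\<dots> = p1 * p1 + q1 * q1" using uw by (simp add: ye_def)
    also have "\<dots> = 1" unfolding p1sq q1sq using s t by (simp add: add_divide_distrib[symmetric])
    finally show ?thesis .
  qed
  have x0y: "vec n x0 \<bullet> vec n (ye e) = 0" if e: "e \<in> E" for e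
  proof -
    obtain u w where uw: "e = {u,w}" "u \<in> X" "w \<in> Y" "u \<notin> Y" "w \<notin> X" "u \<noteq> w" using edge[OF e] by blast
    have "vec n x0 \<bullet> vec n (ye e) = (\<Sum>i\<in>{0..<n}. (if i \<in> e then x0 i * ye e i else 0))"
      unfolding dot_vec by (rule sum.cong) (auto simp: ye_def)
    also have "\<dots> = (\<Sum>i\<in>e. x0 i * ye e i)" by (rule sum_supp[OF esub[OF e]])
    also have "\<dots> = p0 * p1 - q0 * q1" using uw by (simp add: ye_def x0_def)
    finally show ?thesis using pp by simp
  qed
  have yx0: "vec n (ye e) \<bullet> vec n x0 = 0" if e: "e \<in> E" for e
    using x0y[OF e] comm_scalar_prod[of "vec n x0" n "vec n (ye e)"] by simp
  have yy2: "vec n (ye e) \<bullet> vec n (ye f) = 0" if "e \<in> Mt" "f \<in> Mt" "e \<noteq> f" for e f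
  proof -
    have d: "e \<inter> f = {}" using Mt(2) that by blast
    show ?thesis unfolding dot_vec by (rule sum.neutral) (use d in \<open>auto simp: ye_def\<close>)
  qed
  have esE: "es!i \<in> E" if "i < length es" for i using that es(1) Mt(1) nth_mem by blast
  have esMt: "es!i \<in> Mt" if "i < length es" for i using that es(1) nth_mem by blast
  define xs where "xs = vec n x0 # map (\<lambda>e. vec n (ye e)) es"
  have lxs: "length xs = k" using les k1 by (simp add: xs_def)
  have o: "orthonormal n xs"
    unfolding orthonormal_def
  proof (intro conjI allI impI)
    show "set xs \<subseteq> carrier_vec n" unfolding xs_def by auto
    fix i j assume i: "i < length xs" and j: "j < length xs"
    show "xs!i \<bullet> xs!j = (if i = j then 1 else 0)"
    proof (cases i)
      case 0
      show ?thesis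
      proof (cases j)
        case 0 then show ?thesis using \<open>i = 0\<close> x0x0 by (simp add: xs_def)
      next
        case (Suc j')
        then have "j' < length es" using j by (simp add: xs_def)
        then show ?thesis using \<open>i = 0\<close> Suc x0y[OF esE] by (simp add: xs_def)
      qed
    next
      case (Suc i')
      then have i': "i' < length es" using i by (simp add: xs_def)
      show ?thesis
      proof (cases j)
        case 0 then show ?thesis using Suc i' yx0[OF esE] by (simp add: xs_def)
      next
        case (Suc j')
        then have j': "j' < length es" using j by (simp add: xs_def)
        show ?thesis
        proof (cases "i' = j'")
          case True then show ?thesis using \<open>i = Suc i'\<close> Suc yy[OF esE[OF i']] i' by (simp add: xs_def)
        next
          case False
          then have "es!i' \<noteq> es!j'" using es(2) i' j' by (simp add: nth_eq_iff_index_eq)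
          then show ?thesis using \<open>i = Suc i'\<close> Suc False yy2[OF esMt[OF i'] esMt[OF j']] i' j' by (simp add: xs_def)
        qed
      qed
    qed
  qed
  let ?A = "A_alpha \<alpha> n E"
  define T1 where "T1 = real (card E) * (\<alpha> * (1/(2*s) + 1/(2*t)) + (1-\<alpha>) * (2 * (1/(2*sqrt(s*t)))))"
  define T2 where "T2 = \<alpha> - 2 * (1 - \<alpha>) * sqrt (s * t) / (s + t)"
  have Q0: "vec n x0 \<bullet> (?A *\<^sub>v vec n x0) = T1"
  proof -
    have "vec n x0 \<bullet> (?A *\<^sub>v vec n x0) = (\<Sum>e\<in>E. \<alpha> * (\<Sum>v\<in>e. (x0 v)^2) + (1-\<alpha>) * ((\<Sum>v\<in>e. x0 v)^2 - (\<Sum>v\<in>e. (x0 v)^2)))"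
      by (rule quad_graph_fun[OF sg])
    also have "\<dots> = (\<Sum>e\<in>E. \<alpha> * (1/(2*s) + 1/(2*t)) + (1-\<alpha>) * (2 * (1/(2*sqrt(s*t)))))"
    proof (rule sum.cong)
      fix e assume e: "e \<in> E"
      obtain u w where uw: "e = {u,w}" "u \<in> X" "w \<in> Y" "u \<notin> Y" "w \<notin> X" "u \<noteq> w" using edge[OF e] by blast
      have a: "(\<Sum>v\<in>e. (x0 v)^2) = p0*p0 + q0*q0" using uw by (simp add: x0_def power2_eq_square)
      have b: "(\<Sum>v\<in>e. x0 v) = p0 + q0" using uw by (simp add: x0_def)
      have c: "(p0 + q0)^2 - (p0*p0 + q0*q0) = 2 * (p0 * q0)" by (simp add: power2_eq_square algebra_simps)
      show "\<alpha> * (\<Sum>v\<in>e. (x0 v)^2) + (1-\<alpha>) * ((\<Sum>v\<in>e. x0 v)^2 - (\<Sum>v\<in>e. (x0 v)^2)) =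
        \<alpha> * (1/(2*s) + 1/(2*t)) + (1-\<alpha>) * (2 * (1/(2*sqrt(s*t))))"
        unfolding a b unfolding c unfolding pq0 p0sq q0sq ..
    qed simp
    finally show ?thesis unfolding T1_def by simp
  qed
  have Qe: "vec n (ye e) \<bullet> (?A *\<^sub>v vec n (ye e)) \<ge> T2" if e: "e \<in> E" for e
  proof -
    define Qf where "Qf f = \<alpha> * (\<Sum>v\<in>f. (ye e v)^2) + (1-\<alpha>) * ((\<Sum>v\<in>f. ye e v)^2 - (\<Sum>v\<in>f. (ye e v)^2))" for f
    have eq: "vec n (ye e) \<bullet> (?A *\<^sub>v vec n (ye e)) = (\<Sum>f\<in>E. Qf f)"
      unfolding Qf_def by (rule quad_graph_fun[OF sg])
    obtain u w where uw: "e = {u,w}" "u \<in> X" "w \<in> Y" "u \<notin> Y" "w \<notin> X" "u \<noteq> w" using edge[OF e] by blast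
    have Qe: "Qf e = T2"
    proof -
      have a: "(\<Sum>v\<in>e. (ye e v)^2) = p1*p1 + q1*q1" using uw by (simp add: ye_def power2_eq_square)
      have b: "(\<Sum>v\<in>e. ye e v) = p1 - q1" using uw by (simp add: ye_def)
      have c: "(p1 - q1)^2 - (p1*p1 + q1*q1) = - 2 * (p1 * q1)" by (simp add: power2_eq_square algebra_simps)
      have d: "p1*p1 + q1*q1 = 1" unfolding p1sq q1sq using s t by (simp add: add_divide_distrib[symmetric])
      show ?thesis unfolding Qf_def a b unfolding c unfolding d pq1 T2_def by simp
    qed
    have nn: "0 \<le> Qf f" if f: "f \<in> E - {e}" for f
    proof -
      obtain p q where pq: "f = {p,q}" "p \<noteq> q" using sg f unfolding simple_graph_def by blast
      have z: "ye e p * ye e q = 0"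
      proof (rule ccontr)
        assume "ye e p * ye e q \<noteq> 0"
        hence "p \<in> e" "q \<in> e" unfolding ye_def by (auto split: if_splits)
        hence "f = e" using pq uw by auto
        thus False using f by simp
      qed
      have "Qf f = \<alpha> * ((ye e p)^2 + (ye e q)^2) + (1-\<alpha>) * (2 * (ye e p * ye e q))"
        unfolding Qf_def pq using pq(2) by (simp add: power2_eq_square algebra_simps)
      also have "\<dots> = \<alpha> * ((ye e p)^2 + (ye e q)^2)" using z by simp
      finally show ?thesis using a0 by simp
    qed
    have "Qf e \<le> (\<Sum>f\<in>E. Qf f)" by (rule member_le_sum[OF e nn fin])
    thus ?thesis using eq Qe by simp
  qed
  have kf: "(\<Sum>i<length xs. xs!i \<bullet> (?A *\<^sub>v xs!i)) \<le> S_k (length xs) ?A"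
    by (rule ky_fan[OF A_carrier A_sym o])
  have "(\<Sum>i<length xs. xs!i \<bullet> (?A *\<^sub>v xs!i)) =
      xs!0 \<bullet> (?A *\<^sub>v xs!0) + (\<Sum>i<length es. xs!(Suc i) \<bullet> (?A *\<^sub>v xs!(Suc i)))"
    unfolding xs_def by (simp only: length_Cons length_map sum.lessThan_Suc_shift)
  also have "xs!0 \<bullet> (?A *\<^sub>v xs!0) = T1" using Q0 by (simp add: xs_def)
  also have "(\<Sum>i<length es. xs!(Suc i) \<bullet> (?A *\<^sub>v xs!(Suc i))) =
      (\<Sum>i<length es. vec n (ye (es!i)) \<bullet> (?A *\<^sub>v vec n (ye (es!i))))"
    by (rule sum.cong) (auto simp: xs_def)
  also have "\<dots> = (\<Sum>e\<in>Mt. vec n (ye e) \<bullet> (?A *\<^sub>v vec n (ye e)))"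
    unfolding es(1)[symmetric] by (rule sum_set_nth[OF es(2), symmetric])
  finally have lhs: "(\<Sum>i<length xs. xs!i \<bullet> (?A *\<^sub>v xs!i)) = T1 + (\<Sum>e\<in>Mt. vec n (ye e) \<bullet> (?A *\<^sub>v vec n (ye e)))" .
  have "(\<Sum>e\<in>Mt. T2) \<le> (\<Sum>e\<in>Mt. vec n (ye e) \<bullet> (?A *\<^sub>v vec n (ye e)))"
    by (rule sum_mono, rule Qe, insert Mt(1), auto)
  moreover have cM: "real (card Mt) = real k - 1" using Mt(3) k1 by (simp add: of_nat_diff)
  moreover have "(\<Sum>e\<in>Mt. T2) = real (card Mt) * T2" by simp
  ultimately have le: "(real k - 1) * T2 \<le> (\<Sum>e\<in>Mt. vec n (ye e) \<bullet> (?A *\<^sub>v vec n (ye e)))" by simp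
  have main: "T1 + (real k - 1) * T2 \<le> S_k k ?A" using kf lhs le unfolding lxs by linarith
  have st: "sqrt (s * t) > 0" using s t by simp
  have "T1 = \<alpha> * real (card E) / 2 * (1 / s + 1 / t) + (1 - \<alpha>) * real (card E) / sqrt (s * t)"
    unfolding T1_def using s t st by (simp add: field_simps)
  thus ?thesis using main unfolding T2_def s_def t_def by simp
qed


theorem theorem5p3:
  fixes n :: nat and E :: "nat set set" and X Y :: "nat set" and \<alpha> :: real and k :: nat
  assumes "simple_graph n E"
    and "connected_graph n E"
    and "bipartition n E X Y"
    and "0 \<le> \<alpha>" and "\<alpha> \<le> 1"
    and "1 \<le> k" and "k \<le> matching_number E + 1"
  shows "S_k k (A_alpha \<alpha> n E) \<ge>
    \<alpha> * real (card E) / 2 * (1 / real (card X) + 1 / real (card Y))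
    + (1 - \<alpha>) * real (card E) / sqrt (real (card X) * real (card Y))
    + (real k - 1) * (\<alpha> - 2 * (1 - \<alpha>) * sqrt (real (card X) * real (card Y))
                                / (real (card X) + real (card Y)))"
  proof -
  have n1: "n \<ge> 1" using assms(2) unfolding connected_graph_def by simp
  show ?thesis
  proof (cases "E = {}")
    case True
    show ?thesis by (rule trivial_case[OF assms(1) n1 True assms(6) assms(7)])
  next
    case False
    show ?thesis by (rule main_case[OF assms(1) assms(3) False assms(4) assms(5) assms(6) assms(7)])
  qed
qed

end
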